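(* Let $n\geq2$ be an integer, $b:=-n+i$, and $D\subset\{0,1,\ldots,n^2\}$. Let $\alpha\in E_{n,D}$ and suppose there is exactly one sequence $(\alpha_j)_{j\ge1}$ with $\alpha_j\in D-D$ for all $j$ and $\alpha=\sum_{j\ge1}\alpha_jb^{-j}$. Then $$C_{n,D}\cap(C_{n,D}+\alpha)=\Big\{\sum_{j\ge1}z_jb^{-j}: z_j\in D\cap(D+\alpha_j)\text{ for all }j\Big\}.$$
   Context: $C_{n,D}$ is the attractor of $\{z\mapsto b^{-1}(z+d): d\in D\}$, i.e. $C_{n,D}=\{\sum_{j\ge1}d_jb^{-j}: d_j\in D\}$. $E_{n,D}$ is the attractor of $\{z\mapsto b^{-1}(z+\delta):\delta\in D-D\}$, i.e. $E_{n,D}=\{\sum_{j\ge1}\delta_jb^{-j}: \delta_j\in D-D\}$, where $D-D=\{d-d':d,d'\in D\}$. *)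

theory Defs
  imports "HOL-Analysis.Analysis"
begin

text \<open>Radix expansion  sum_{j>=1} d_j b^{-j}; digit sequences are indexed from 0,
  so d j plays the role of d_{j+1}.\<close>
definition radix_val :: "complex \<Rightarrow> (nat \<Rightarrow> int) \<Rightarrow> complex" where
  "radix_val b d = (\<Sum>j. of_int (d j) / b ^ Suc j)"

definition diffset :: "int set \<Rightarrow> int set" where
  "diffset D = {d - d' | d d'. d \<in> D \<and> d' \<in> D}"

definition Cset :: "nat \<Rightarrow> int set \<Rightarrow> complex set" where
  "Cset n D = {radix_val (- of_nat n + \<i>) d | d. \<forall>j. d j \<in> D}"

definition Eset :: "nat \<Rightarrow> int set \<Rightarrow> complex set" where
  "Eset n D = {radix_val (- of_nat n + \<i>) d | d. \<forall>j. d j \<in> diffset D}"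

end

theory Submission
  imports Defs
begin

lemma radix_summable:
  fixes b :: complex and d :: "nat \<Rightarrow> int" and K :: int
  assumes "\<forall>j. \<bar>d j\<bar> \<le> K" "norm b > 1"
  shows "summable (\<lambda>j. of_int (d j) / b ^ Suc j)"
proof (rule summable_norm_cancel, rule summable_comparison_test)
  have i: "inverse (norm b) < 1" "0 \<le> inverse (norm b)" using assms(2)
    by (auto simp: inverse_less_1_iff)
  show "summable (\<lambda>j. of_int K / norm b * inverse (norm b) ^ j)"
    by (rule summable_mult, rule summable_geometric) (use i in auto)
  show "\<exists>N. \<forall>j\<ge>N. norm (norm (of_int (d j) / b ^ Suc j)) \<le> of_int K / norm b * inverse (norm b) ^ j"
  proof (intro exI allI impI)
    fix j :: nat
    have "norm (norm (of_int (d j) / b ^ Suc j)) = \<bar>of_int (d j)\<bar> / norm b ^ Suc j"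
      by (simp add: norm_divide norm_power norm_mult)
    also have "\<dots> \<le> of_int K / norm b ^ Suc j"
    proof (intro divide_right_mono)
      have "real_of_int \<bar>d j\<bar> \<le> of_int K" using assms(1) by (simp only: of_int_le_iff)
      thus "\<bar>real_of_int (d j)\<bar> \<le> of_int K" by simp
    qed simp
    also have "\<dots> = of_int K / norm b * inverse (norm b) ^ j"
      by (simp add: field_simps power_inverse)
    finally show "norm (norm (of_int (d j) / b ^ Suc j)) \<le> of_int K / norm b * inverse (norm b) ^ j" .
  qed
qed

lemma radix_diff:
  assumes "\<forall>j. \<bar>x j\<bar> \<le> K" "\<forall>j. \<bar>y j\<bar> \<le> K" "norm b > 1"
  shows "radix_val b (\<lambda>j. x j - y j) = radix_val b x - radix_val b y"
proof -
  have "radix_val b x - radix_val b y = (\<Sum>j. of_int (x j) / b ^ Suc j - of_int (y j) / b ^ Suc j)"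
    unfolding radix_val_def
    by (rule suminf_diff; rule radix_summable[where K=K]; use assms in auto)
  thus ?thesis unfolding radix_val_def by (simp add: diff_divide_distrib)
qed

lemma norm_b: "n \<ge> 2 \<Longrightarrow> norm (- of_nat n + \<i>) > 1"
proof -
  assume "n \<ge> 2"
  hence "(1::real) < (real n)^2 + 1" by simp
  hence "1 < sqrt ((real n)^2 + 1)" by (simp add: real_less_rsqrt)
  thus ?thesis by (simp add: cmod_def)
qed

theorem lemma5p4:
  fixes n :: nat and D :: "int set" and \<alpha> :: complex and a :: "nat \<Rightarrow> int"
  assumes "n \<ge> 2"
    and "D \<subseteq> {0..int n ^ 2}"
    and "\<alpha> \<in> Eset n D"
    and "\<forall>j. a j \<in> diffset D"
    and "\<alpha> = radix_val (- of_nat n + \<i>) a"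
    and "\<forall>a'. (\<forall>j. a' j \<in> diffset D) \<and> \<alpha> = radix_val (- of_nat n + \<i>) a' \<longrightarrow> a' = a"
  shows "Cset n D \<inter> ((\<lambda>z. z + \<alpha>) ` Cset n D) =
         {radix_val (- of_nat n + \<i>) z | z. \<forall>j. z j \<in> D \<inter> ((\<lambda>d. d + a j) ` D)}"
proof -
  define b :: complex where "b = - of_nat n + \<i>"
  define K :: int where "K = int n ^ 2"
  have nb: "norm b > 1" using norm_b[OF assms(1)] by (simp add: b_def)
  have bD: "\<bar>x\<bar> \<le> K" if "x \<in> D" for x using assms(2) that by (auto simp: K_def)
  have bDD: "\<bar>x\<bar> \<le> K" if xD: "x \<in> diffset D" for x
  proof -
    obtain d d' where "x = d - d'" "d \<in> D" "d' \<in> D" using xD by (auto simp: diffset_def)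
    moreover have "0 \<le> d" "d \<le> K" "0 \<le> d'" "d' \<le> K"
      using assms(2) \<open>d \<in> D\<close> \<open>d' \<in> D\<close> unfolding K_def by auto
    ultimately show ?thesis by linarith
  qed
  show ?thesis
  proof (intro equalityI subsetI)
    fix x assume "x \<in> Cset n D \<inter> ((\<lambda>z. z + \<alpha>) ` Cset n D)"
    then obtain z w where z: "\<forall>j. z j \<in> D" "x = radix_val b z"
      and w: "\<forall>j. w j \<in> D" "x = radix_val b w + \<alpha>"
      by (auto simp: Cset_def b_def)
    have dd: "\<forall>j. z j - w j \<in> diffset D" using z w by (auto simp: diffset_def)
    have "radix_val b (\<lambda>j. z j - w j) = \<alpha>"
    proof -
      have "radix_val b (\<lambda>j. z j - w j) = radix_val b z - radix_val b w"
        using radix_diff[of z K w b] z w bD nb by auto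
      thus ?thesis using z(2) w(2) by (metis add_diff_cancel_left')
    qed
    hence "(\<lambda>j. z j - w j) = a" using assms(6) dd by (auto simp: b_def)
    hence "\<forall>j. z j \<in> D \<inter> ((\<lambda>d. d + a j) ` D)" using z w
      by (metis (no_types, lifting) IntI add.commute diff_add_cancel image_eqI)
    thus "x \<in> {radix_val (- of_nat n + \<i>) z | z. \<forall>j. z j \<in> D \<inter> ((\<lambda>d. d + a j) ` D)}"
      using z by (auto simp: b_def)
  next
    fix x assume "x \<in> {radix_val (- of_nat n + \<i>) z | z. \<forall>j. z j \<in> D \<inter> ((\<lambda>d. d + a j) ` D)}"
    then obtain z where z: "\<forall>j. z j \<in> D \<inter> ((\<lambda>d. d + a j) ` D)" "x = radix_val b z"
      by (auto simp: b_def)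
    define w where "w j = z j - a j" for j
    have w: "\<forall>j. w j \<in> D"
    proof
      fix j
      from z(1) obtain d where "d \<in> D" "z j = d + a j" by blast
      thus "w j \<in> D" by (simp add: w_def)
    qed
    have "radix_val b w = x - \<alpha>"
      unfolding w_def z(2) assms(5) b_def[symmetric]
      by (rule radix_diff[where K=K]) (use z bD bDD assms(4) nb in auto)
    hence "x = radix_val b w + \<alpha>" by simp
    moreover have "x \<in> Cset n D" using z by (auto simp: Cset_def b_def)
    moreover have "radix_val b w \<in> Cset n D" using w by (auto simp: Cset_def b_def)
    ultimately show "x \<in> Cset n D \<inter> ((\<lambda>z. z + \<alpha>) ` Cset n D)" by auto
  qed
qed

end
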